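(* Let $q_1,\dots,q_5\in\widehat{\mathbb H}$ be five distinct points and let $q'_1,\dots,q'_5\in\widehat{\mathbb H}$ be five distinct points. Then there exists a fractional linear transformation $T$ with $T(q_n)=q'_n$ for $n=1,\dots,5$ if and only if there exists $a\in\mathbb H^\times$ such that $$Q(q'_1,q'_2,q'_3,q'_4)=aQ(q_1,q_2,q_3,q_4)a^{-1}\quad\text{and}\quad Q(q'_1,q'_2,q'_3,q'_5)=aQ(q_1,q_2,q_3,q_5)a^{-1}.$$
   Context: $\mathbb H$ denotes the quaternions, $\mathbb H^\times=\mathbb H\setminus\{0\}$, $\widehat{\mathbb H}=\mathbb H\cup\{\infty\}$. A fractional linear transformation of $\widehat{\mathbb H}$ is a map $q\mapsto(aq+b)(cq+d)^{-1}$ with $\begin{pmatrix}a&b\\c&d\end{pmatrix}\in GL(2,\mathbb H)$. For four distinct points the cross-ratio is $Q(q_1,q_2,q_3,q_4)=(q_2-q_1)^{-1}(q_4-q_1)(q_4-q_3)^{-1}(q_2-q_3)$, defined by taking limits if some $q_n=\infty$. *)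

theory Defs
  imports Complex_Main
begin

datatype quat = Quat (qre: real) (qi: real) (qj: real) (qk: real)

lemma quat_eq_iff: "x = y \<longleftrightarrow> qre x = qre y \<and> qi x = qi y \<and> qj x = qj y \<and> qk x = qk y"
  by (cases x; cases y) auto

definition qnorm2 :: "quat \<Rightarrow> real" where
  "qnorm2 x = (qre x)^2 + (qi x)^2 + (qj x)^2 + (qk x)^2"

lemma qnorm2_pos: "x \<noteq> Quat 0 0 0 0 \<Longrightarrow> qnorm2 x > 0"
  unfolding qnorm2_def
  by (cases x) (auto simp: sum_power2_gt_zero_iff add_pos_nonneg add_nonneg_pos)

instantiation quat :: division_ring
begin

definition "0 = Quat 0 0 0 0"
definition "1 = Quat 1 0 0 0"
definition "x + y = Quat (qre x + qre y) (qi x + qi y) (qj x + qj y) (qk x + qk y)"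
definition "x - y = Quat (qre x - qre y) (qi x - qi y) (qj x - qj y) (qk x - qk y)"
definition "- x = Quat (- qre x) (- qi x) (- qj x) (- qk x)"
definition "x * y = Quat
   (qre x * qre y - qi x * qi y - qj x * qj y - qk x * qk y)
   (qre x * qi y + qi x * qre y + qj x * qk y - qk x * qj y)
   (qre x * qj y - qi x * qk y + qj x * qre y + qk x * qi y)
   (qre x * qk y + qi x * qj y - qj x * qi y + qk x * qre y)"
definition "inverse x = Quat (qre x / qnorm2 x) (- qi x / qnorm2 x) (- qj x / qnorm2 x) (- qk x / qnorm2 x)"
definition divide_quat_def: "divide (x::quat) y = x * inverse y"

lemma qnorm2_nz: "x \<noteq> Quat 0 0 0 0 \<Longrightarrow> qnorm2 x \<noteq> 0"
  using qnorm2_pos[of x] by simp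

lemma quat_left_inv_aux:
  fixes a :: quat and N :: real
  assumes "N = qnorm2 a" "N \<noteq> 0"
  shows "inverse a * a = 1"
proof -
  obtain r x y z where a: "a = Quat r x y z" by (cases a)
  have N: "N = r*r + x*x + y*y + z*z" using assms(1) by (simp add: a qnorm2_def power2_eq_square)
  have e: "(r / N) * r + (x / N) * x + (y / N) * y + (z / N) * z = 1"
    using assms(2) unfolding N by (simp add: divide_simps)
  show ?thesis using e assms(1)[symmetric]
    by (simp add: a quat_eq_iff times_quat_def inverse_quat_def one_quat_def algebra_simps)
qed

lemma quat_right_inv_aux:
  fixes a :: quat and N :: real
  assumes "N = qnorm2 a" "N \<noteq> 0"
  shows "a * inverse a = 1"
proof -
  obtain r x y z where a: "a = Quat r x y z" by (cases a)
  have N: "N = r*r + x*x + y*y + z*z" using assms(1) by (simp add: a qnorm2_def power2_eq_square)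
  have e: "r * (r / N) + x * (x / N) + y * (y / N) + z * (z / N) = 1"
    using assms(2) unfolding N by (simp add: divide_simps)
  show ?thesis using e assms(1)[symmetric]
    by (simp add: a quat_eq_iff times_quat_def inverse_quat_def one_quat_def algebra_simps)
qed

instance
proof (standard, goal_cases)
  case (12 a)
  then have n: "qnorm2 a \<noteq> 0" using qnorm2_nz[of a] by (auto simp: zero_quat_def)
  then show ?case using quat_left_inv_aux by blast
next
  case (13 a)
  then have n: "qnorm2 a \<noteq> 0" using qnorm2_nz[of a] by (auto simp: zero_quat_def)
  then show ?case using quat_right_inv_aux by blast
qed (simp_all add: quat_eq_iff plus_quat_def zero_quat_def uminus_quat_def minus_quat_def
    times_quat_def one_quat_def algebra_simps divide_quat_def inverse_quat_def qnorm2_def)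

end

text \<open>A point of the extended quaternions is \<open>Some q\<close> for \<open>q\<close> a quaternion, or \<open>None\<close> for
  the point at infinity.\<close>

type_synonym hquat = "quat option"

definition qGL2 :: "quat \<Rightarrow> quat \<Rightarrow> quat \<Rightarrow> quat \<Rightarrow> bool" where
  "qGL2 a b c d \<longleftrightarrow> (\<exists>a' b' c' d'.
     a * a' + b * c' = 1 \<and> a * b' + b * d' = 0 \<and> c * a' + d * c' = 0 \<and> c * b' + d * d' = 1 \<and>
     a' * a + b' * c = 1 \<and> a' * b + b' * d = 0 \<and> c' * a + d' * c = 0 \<and> c' * b + d' * d = 1)"

text \<open>The map q \<mapsto> (aq+b)(cq+d)^{-1} on the extended quaternions, extended by continuity:
  the value is infinity where cq+d = 0, and at infinity the value is a c^{-1} (infinity if c = 0).\<close>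

fun flt :: "quat \<Rightarrow> quat \<Rightarrow> quat \<Rightarrow> quat \<Rightarrow> hquat \<Rightarrow> hquat" where
  "flt a b c d None = (if c = 0 then None else Some (a * inverse c))"
| "flt a b c d (Some q) = (if c * q + d = 0 then None else Some ((a * q + b) * inverse (c * q + d)))"

definition is_flt :: "(hquat \<Rightarrow> hquat) \<Rightarrow> bool" where
  "is_flt T \<longleftrightarrow> (\<exists>a b c d. qGL2 a b c d \<and> T = flt a b c d)"

text \<open>Cross-ratio Q(q1,q2,q3,q4) = (q2-q1)^{-1}(q4-q1)(q4-q3)^{-1}(q2-q3), for distinct points,
  with the values at infinity given by limits (for q2 = infinity: the limit along the real axis).\<close>

fun cross_ratio :: "hquat \<Rightarrow> hquat \<Rightarrow> hquat \<Rightarrow> hquat \<Rightarrow> quat" where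
  "cross_ratio (Some q1) (Some q2) (Some q3) (Some q4) =
     inverse (q2 - q1) * (q4 - q1) * inverse (q4 - q3) * (q2 - q3)"
| "cross_ratio None (Some q2) (Some q3) (Some q4) = inverse (q4 - q3) * (q2 - q3)"
| "cross_ratio (Some q1) None (Some q3) (Some q4) = (q4 - q1) * inverse (q4 - q3)"
| "cross_ratio (Some q1) (Some q2) None (Some q4) = inverse (q2 - q1) * (q4 - q1)"
| "cross_ratio (Some q1) (Some q2) (Some q3) None = inverse (q2 - q1) * (q2 - q3)"
| "cross_ratio _ _ _ _ = 0"

end

theory Submission imports Defs begin

definition toP :: "quat \<Rightarrow> quat \<Rightarrow> hquat" where
  "toP u v = (if v = 0 then None else Some (u * inverse v))"

lemma flt_toP:
  assumes "u \<noteq> 0 \<or> v \<noteq> 0"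
  shows "flt a b c d (toP u v) = toP (a*u+b*v) (c*u+d*v)"
proof (cases "v = 0")
  case True
  then have u: "u \<noteq> 0" using assms by simp
  have "a * u * inverse (c * u) = a * inverse c" if "c \<noteq> 0"
  proof -
    have "a * u * inverse (c * u) = a * (u * inverse u) * inverse c"
      using u that by (simp only: nonzero_inverse_mult_distrib[OF that u] mult.assoc)
    then show ?thesis using u by (simp add: mult.assoc)
  qed
  then show ?thesis using True u by (simp add: toP_def)
next
  case False
  define q where "q = u * inverse v"
  have u: "u = q * v" using False by (simp add: q_def mult.assoc)
  have e1: "a*u+b*v = (a*q+b)*v" "c*u+d*v = (c*q+d)*v" by (simp_all add: u algebra_simps)
  have "(a*q+b)*v*inverse((c*q+d)*v) = (a*q+b)*inverse(c*q+d)" if "c*q+d \<noteq> 0"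
  proof -
    have "(a*q+b)*v*inverse((c*q+d)*v) = (a*q+b)*(v*inverse v)*inverse(c*q+d)"
      by (simp only: nonzero_inverse_mult_distrib[OF that False] mult.assoc)
    then show ?thesis using False by simp
  qed
  then show ?thesis using False unfolding e1 by (simp add: toP_def q_def[symmetric])
qed

lemma toP_rep: obtains u v where "x = toP u v" "u \<noteq> 0 \<or> v \<noteq> 0"
proof (cases x)
  case None then show ?thesis using that[of 1 0] by (simp add: toP_def)
next
  case (Some q) then show ?thesis using that[of q 1] by (simp add: toP_def)
qed

lemma qGL2_nz:
  assumes "qGL2 a b c d" "u \<noteq> 0 \<or> v \<noteq> 0"
  shows "a*u+b*v \<noteq> 0 \<or> c*u+d*v \<noteq> 0"
proof (rule ccontr)
  assume h: "\<not> ?thesis"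
  from assms(1) obtain a' b' c' d' where g:
     "a' * a + b' * c = 1" "a' * b + b' * d = 0" "c' * a + d' * c = 0" "c' * b + d' * d = 1"
    unfolding qGL2_def by blast
  have "a'*(a*u+b*v) + b'*(c*u+d*v) = (a'*a + b'*c)*u + (a'*b+b'*d)*v"
    by (simp add: algebra_simps)
  then have "u = a'*(a*u+b*v) + b'*(c*u+d*v)" using g by simp
  moreover have "c'*(a*u+b*v) + d'*(c*u+d*v) = (c'*a + d'*c)*u + (c'*b+d'*d)*v"
    by (simp add: algebra_simps)
  then have "v = c'*(a*u+b*v) + d'*(c*u+d*v)" using g by simp
  ultimately show False using h assms(2) by simp
qed

lemma flt_comp:
  assumes "qGL2 a' b' c' d'"
  shows "flt a b c d (flt a' b' c' d' x) =
     flt (a*a'+b*c') (a*b'+b*d') (c*a'+d*c') (c*b'+d*d') x"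
proof -
  obtain u v where x: "x = toP u v" "u \<noteq> 0 \<or> v \<noteq> 0" by (rule toP_rep)
  have nz: "a'*u+b'*v \<noteq> 0 \<or> c'*u+d'*v \<noteq> 0" using qGL2_nz[OF assms x(2)] .
  show ?thesis unfolding x(1) flt_toP[OF x(2)] flt_toP[OF nz]
    by (simp add: algebra_simps)
qed

lemma flt_id: "flt 1 0 0 1 x = x"
  by (cases x) auto

lemma qGL2_sym: "qGL2 a b c d \<Longrightarrow> \<exists>a' b' c' d'. qGL2 a' b' c' d' \<and>
   (\<forall>x. flt a' b' c' d' (flt a b c d x) = x) \<and> (\<forall>x. flt a b c d (flt a' b' c' d' x) = x)"
proof -
  assume h: "qGL2 a b c d"
  then obtain a' b' c' d' where g:
     "a * a' + b * c' = 1" "a * b' + b * d' = 0" "c * a' + d * c' = 0" "c * b' + d * d' = 1"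
     "a' * a + b' * c = 1" "a' * b + b' * d = 0" "c' * a + d' * c = 0" "c' * b + d' * d = 1"
    unfolding qGL2_def by blast
  have g2: "qGL2 a' b' c' d'" unfolding qGL2_def using g by blast
  show ?thesis
    apply (rule exI[of _ a'], rule exI[of _ b'], rule exI[of _ c'], rule exI[of _ d'])
    using g g2 h by (simp add: flt_comp flt_id)
qed

type_synonym qm = "quat \<times> quat \<times> quat \<times> quat"

fun mm :: "qm \<Rightarrow> qm \<Rightarrow> qm" where
  "mm (a,b,c,d) (a',b',c',d') = (a*a'+b*c', a*b'+b*d', c*a'+d*c', c*b'+d*d')"

fun fltm :: "qm \<Rightarrow> hquat \<Rightarrow> hquat" where
  "fltm (a,b,c,d) x = flt a b c d x"

definition qGLm :: "qm \<Rightarrow> bool" where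
  "qGLm M \<longleftrightarrow> (\<exists>N. mm M N = (1,0,0,1) \<and> mm N M = (1,0,0,1))"

lemma mm_assoc: "mm (mm x y) z = mm x (mm y z)"
  by (cases x; cases y; cases z) (simp add: algebra_simps)

lemma mm_id1: "mm (1,0,0,1) x = x" and mm_id2: "mm x (1,0,0,1) = x"
  by (cases x; simp)+

lemma qGL2_m: "qGL2 a b c d \<longleftrightarrow> qGLm (a,b,c,d)"
  unfolding qGL2_def qGLm_def by auto

lemma qGLm_mult: assumes "qGLm M" "qGLm N" shows "qGLm (mm M N)"
proof -
  obtain M' where m: "mm M M' = (1,0,0,1)" "mm M' M = (1,0,0,1)" using assms(1) qGLm_def by blast
  obtain N' where n: "mm N N' = (1,0,0,1)" "mm N' N = (1,0,0,1)" using assms(2) qGLm_def by blast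
  have "mm (mm M N) (mm N' M') = (1,0,0,1)"
    by (simp add: mm_assoc[symmetric] m n mm_id1 mm_id2) (simp add: mm_assoc m n mm_id1)
  moreover have "mm (mm N' M') (mm M N) = (1,0,0,1)"
    by (simp add: mm_assoc[symmetric] m n mm_id1 mm_id2) (simp add: mm_assoc m n mm_id1)
  ultimately show ?thesis unfolding qGLm_def by blast
qed

lemma fltm_comp: assumes "qGLm N" shows "fltm M (fltm N x) = fltm (mm M N) x"
  using assms flt_comp[of _ _ _ _ _ _ _ _ x] by (cases M; cases N) (simp add: qGL2_m)

lemma fltm_inv: assumes "qGLm M"
  shows "\<exists>M'. qGLm M' \<and> (\<forall>x. fltm M' (fltm M x) = x) \<and> (\<forall>x. fltm M (fltm M' x) = x)"
proof -
  obtain a b c d where M: "M = (a,b,c,d)" by (cases M)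
  show ?thesis using qGL2_sym[of a b c d] assms unfolding M qGL2_m
    by (metis fltm.simps qGL2_m)
qed

lemma qGLm_upper: "a \<noteq> 0 \<Longrightarrow> d \<noteq> 0 \<Longrightarrow> qGLm (a,b,0,d)"
  unfolding qGLm_def
  apply (rule exI[of _ "(inverse a, - (inverse a * b * inverse d), 0, inverse d)"])
  by (simp add: mult.assoc[symmetric]) (simp add: mult.assoc)

lemma qGLm_low: "qGLm (1,0,1,1)"
  unfolding qGLm_def by (rule exI[of _ "(1,0,-1,1)"]) simp

lemma qGLm_swap: "qGLm (0,1,1,0)"
  unfolding qGLm_def by (rule exI[of _ "(0,1,1,0)"]) simp

lemma inv_lem: "(B::quat) \<noteq> 0 \<Longrightarrow> y \<noteq> 0 \<Longrightarrow> inverse (inverse B * y) = inverse y * B"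
  by (subst nonzero_inverse_mult_distrib) auto

definition normP :: "hquat \<Rightarrow> hquat \<Rightarrow> hquat \<Rightarrow> qm \<Rightarrow> bool" where
  "normP p1 p2 p3 M \<longleftrightarrow> qGLm M \<and> fltm M p1 = Some 0 \<and> fltm M p2 = Some 1 \<and> fltm M p3 = None \<and>
     (\<forall>x. x \<noteq> p1 \<and> x \<noteq> p2 \<and> x \<noteq> p3 \<longrightarrow> fltm M x = Some (cross_ratio p1 p2 p3 x))"

lemma dist_lin: "(A::quat) * x - (A * p) = A * (x - p)"
  by (simp add: right_diff_distrib)

lemma norm_fin:
  fixes p1 p2 p3 :: quat
  assumes "p1 \<noteq> p2" "p1 \<noteq> p3" "p2 \<noteq> p3"
  shows "normP (Some p1) (Some p2) (Some p3)
     (inverse (p2-p1), -(inverse (p2-p1)*p1), inverse (p2-p3), -(inverse (p2-p3)*p3))"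
proof -
  define A where "A = inverse (p2-p1)"
  define B where "B = inverse (p2-p3)"
  have A0: "A \<noteq> 0" and B0: "B \<noteq> 0" using assms by (auto simp: A_def B_def)
  have "(A, -(A*p1), B, -(B*p3)) = mm (A,0,0,B) (mm (1,0,1,1) (1,-p1,0,p1-p3))" by simp
  moreover have "qGLm (mm (A,0,0,B) (mm (1,0,1,1) (1,-p1,0,p1-p3)))"
    using A0 B0 assms by (intro qGLm_mult qGLm_upper qGLm_low) auto
  ultimately have gl: "qGLm (A, -(A*p1), B, -(B*p3))" by simp
  have v: "fltm (A, -(A*p1), B, -(B*p3)) (Some x) =
     (if x = p3 then None else Some (A * (x - p1) * inverse (x - p3) * inverse B))" for x
    using B0 by (simp add: dist_lin nonzero_inverse_mult_distrib mult.assoc)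
  have vN: "fltm (A, -(A*p1), B, -(B*p3)) None = Some (A * inverse B)" using B0 by simp
  have iB: "inverse B = p2 - p3" using assms by (simp add: B_def)
  have a1: "A * (p2 - p1) = 1" using assms by (simp add: A_def)
  have b1: "B * (p2 - p3) = 1" using assms by (simp add: B_def)
  show ?thesis unfolding normP_def A_def[symmetric] B_def[symmetric]
  proof (intro conjI allI impI)
    fix x assume x: "x \<noteq> Some p1 \<and> x \<noteq> Some p2 \<and> x \<noteq> Some p3"
    show "fltm (A, -(A*p1), B, -(B*p3)) x = Some (cross_ratio (Some p1) (Some p2) (Some p3) x)"
    proof (cases x)
      case None then show ?thesis using vN by (simp add: A_def iB)
    next
      case (Some y)
      have "cross_ratio (Some p1) (Some p2) (Some p3) x = A * (y-p1) * inverse (y-p3) * inverse B"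
        by (simp add: Some A_def iB)
      then show ?thesis using x v[of y] Some B0 by simp
    qed
  qed (use gl v assms b1 a1 in \<open>auto simp: dist_lin\<close>)
qed

lemma norm_1:
  fixes p2 p3 :: quat
  assumes "p2 \<noteq> p3"
  shows "normP None (Some p2) (Some p3) (0, 1, inverse (p2-p3), -(inverse (p2-p3)*p3))"
proof -
  define B where "B = inverse (p2-p3)"
  have B0: "B \<noteq> 0" using assms by (auto simp: B_def)
  have "(0, 1, B, -(B*p3)) = mm (0,1,1,0) (B, -(B*p3), 0, 1)" by simp
  moreover have "qGLm (mm (0,1,1,0) (B, -(B*p3), 0, 1))"
    using B0 by (intro qGLm_mult qGLm_upper qGLm_swap) auto
  ultimately have gl: "qGLm (0, 1, B, -(B*p3))" by simp
  have v: "fltm (0, 1, B, -(B*p3)) (Some x) =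
     (if x = p3 then None else Some (inverse (x - p3) * inverse B))" for x
    using B0 by (simp add: dist_lin nonzero_inverse_mult_distrib)
  have iB: "inverse B = p2 - p3" using assms by (simp add: B_def)
  have b1: "B * (p2 - p3) = 1" using assms by (simp add: B_def)
  show ?thesis unfolding normP_def B_def[symmetric]
  proof (intro conjI allI impI)
    fix x assume x: "x \<noteq> None \<and> x \<noteq> Some p2 \<and> x \<noteq> Some p3"
    then obtain y where y: "x = Some y" by (cases x) auto
    have "cross_ratio None (Some p2) (Some p3) x = inverse (y-p3) * inverse B"
      by (simp add: y iB)
    then show "fltm (0, 1, B, -(B*p3)) x = Some (cross_ratio None (Some p2) (Some p3) x)"
      using x v[of y] y B0 by simp
  qed (use gl v assms B0 iB b1 in \<open>auto simp: dist_lin\<close>)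
qed

lemma norm_2:
  fixes p1 p3 :: quat
  assumes "p1 \<noteq> p3"
  shows "normP (Some p1) None (Some p3) (1, -p1, 1, -p3)"
proof -
  have "(1, -p1, 1, -p3) = mm (1,0,1,1) (1,-p1,0,p1-p3)" by simp
  moreover have "qGLm (mm (1,0,1,1) (1,-p1,0,p1-p3))"
    using assms by (intro qGLm_mult qGLm_upper qGLm_low) auto
  ultimately have gl: "qGLm (1, -p1, 1, -p3)" by simp
  show ?thesis unfolding normP_def
  proof (intro conjI allI impI)
    fix x assume x: "x \<noteq> Some p1 \<and> x \<noteq> None \<and> x \<noteq> Some p3"
    then obtain y where y: "x = Some y" by (cases x) auto
    show "fltm (1, -p1, 1, -p3) x = Some (cross_ratio (Some p1) None (Some p3) x)"
      using x y by simp
  qed (use gl assms in auto)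
qed

lemma norm_3:
  fixes p1 p2 :: quat
  assumes "p1 \<noteq> p2"
  shows "normP (Some p1) (Some p2) None (inverse (p2-p1), -(inverse (p2-p1)*p1), 0, 1)"
proof -
  define A where "A = inverse (p2-p1)"
  have A0: "A \<noteq> 0" using assms by (auto simp: A_def)
  have gl: "qGLm (A, -(A*p1), 0, 1)" using A0 by (intro qGLm_upper) auto
  have v: "fltm (A, -(A*p1), 0, 1) (Some x) = Some (A * (x - p1))" for x
    by (simp add: dist_lin)
  have "A * (p2 - p1) = 1" using assms by (simp add: A_def)
  then show ?thesis unfolding normP_def A_def[symmetric]
  proof (intro conjI allI impI)
    fix x assume x: "x \<noteq> Some p1 \<and> x \<noteq> Some p2 \<and> x \<noteq> None"
    then obtain y where y: "x = Some y" by (cases x) auto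
    show "fltm (A, -(A*p1), 0, 1) x = Some (cross_ratio (Some p1) (Some p2) None x)"
      using x y v by (simp add: A_def)
  qed (use gl v in auto)
qed

lemma normalizer: assumes "distinct [p1, p2, p3]" shows "\<exists>M. normP p1 p2 p3 M"
proof (cases p1)
  case None
  then obtain a b where "p2 = Some a" "p3 = Some b" using assms by (cases p2; cases p3) auto
  then show ?thesis using None assms norm_1[of a b] by auto
next
  case (Some a1)
  show ?thesis
  proof (cases p2)
    case None
    then obtain b where "p3 = Some b" using assms Some by (cases p3) auto
    then show ?thesis using None Some assms norm_2[of a1 b] by auto
  next
    case (Some a2)
    show ?thesis
    proof (cases p3)
      case None then show ?thesis using \<open>p1 = Some a1\<close> Some assms norm_3[of a1 a2] by auto
    next
      case (Some a3) then show ?thesis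
        using \<open>p1 = Some a1\<close> \<open>p2 = Some a2\<close> assms norm_fin[of a1 a2 a3] by auto
    qed
  qed
qed

lemma fix3:
  assumes "fltm M None = None" "fltm M (Some 0) = Some 0" "fltm M (Some 1) = Some 1"
  shows "\<exists>e. e \<noteq> 0 \<and> (\<forall>x. fltm M (Some x) = Some (e * x * inverse e))"
proof -
  obtain a b c d where M: "M = (a,b,c,d)" by (cases M)
  have c: "c = 0" using assms(1) by (simp add: M split: if_splits)
  have d: "d \<noteq> 0" and bd: "b * inverse d = 0" using assms(2) by (simp_all add: M c split: if_splits)
  have b: "b = 0" using bd d by simp
  have "a * inverse d = 1" using assms(3) d by (simp add: M c b split: if_splits)
  then have "a * inverse d * d = d" by simp
  then have a: "a = d" using d by (simp add: mult.assoc)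
  show ?thesis using d by (intro exI[of _ d]) (simp add: M a b c)
qed

lemma is_flt_m: "qGLm M \<Longrightarrow> is_flt (fltm M)"
  by (cases M) (auto simp: is_flt_def qGL2_m fun_eq_iff)

lemma is_flt_D: "is_flt T \<Longrightarrow> \<exists>M. qGLm M \<and> T = fltm M"
  unfolding is_flt_def by (auto simp: qGL2_m fun_eq_iff)

lemma fltm_conj: "e \<noteq> 0 \<Longrightarrow> fltm (e,0,0,e) (Some x) = Some (e * x * inverse e)"
  by simp

lemma fltm_conjN: "fltm (e,0,0,e) None = None"
  by simp

lemma five: "n \<in> {1..5::nat} \<Longrightarrow> n = 1 \<or> n = 2 \<or> n = 3 \<or> n = 4 \<or> n = 5"
  by auto

theorem mainTheorem3:
  fixes q q' :: "nat \<Rightarrow> hquat"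
  assumes "distinct [q 1, q 2, q 3, q 4, q 5]"
    and "distinct [q' 1, q' 2, q' 3, q' 4, q' 5]"
  shows "(\<exists>T. is_flt T \<and> (\<forall>n\<in>{1..5}. T (q n) = q' n)) \<longleftrightarrow>
         (\<exists>a::quat. a \<noteq> 0 \<and>
            cross_ratio (q' 1) (q' 2) (q' 3) (q' 4) = a * cross_ratio (q 1) (q 2) (q 3) (q 4) * inverse a \<and>
            cross_ratio (q' 1) (q' 2) (q' 3) (q' 5) = a * cross_ratio (q 1) (q 2) (q 3) (q 5) * inverse a)"
proof -
  obtain N where N: "normP (q 1) (q 2) (q 3) N" using normalizer assms(1) by fastforce
  obtain N' where N': "normP (q' 1) (q' 2) (q' 3) N'" using normalizer assms(2) by fastforce
  have glN: "qGLm N" and N1: "fltm N (q 1) = Some 0" and N2: "fltm N (q 2) = Some 1"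
    and N3: "fltm N (q 3) = None"
    and N4: "fltm N (q 4) = Some (cross_ratio (q 1) (q 2) (q 3) (q 4))"
    and N5: "fltm N (q 5) = Some (cross_ratio (q 1) (q 2) (q 3) (q 5))"
    using N assms(1) unfolding normP_def by auto
  have glN': "qGLm N'" and N'1: "fltm N' (q' 1) = Some 0" and N'2: "fltm N' (q' 2) = Some 1"
    and N'3: "fltm N' (q' 3) = None"
    and N'4: "fltm N' (q' 4) = Some (cross_ratio (q' 1) (q' 2) (q' 3) (q' 4))"
    and N'5: "fltm N' (q' 5) = Some (cross_ratio (q' 1) (q' 2) (q' 3) (q' 5))"
    using N' assms(2) unfolding normP_def by auto
  obtain Ni where glNi: "qGLm Ni" and Ni1: "\<And>x. fltm Ni (fltm N x) = x"
    using fltm_inv[OF glN] by blast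
  obtain N'i where glN'i: "qGLm N'i" and N'i1: "\<And>x. fltm N'i (fltm N' x) = x"
    using fltm_inv[OF glN'] by blast
  show ?thesis
  proof
    assume "\<exists>T. is_flt T \<and> (\<forall>n\<in>{1..5}. T (q n) = q' n)"
    then obtain M where glM: "qGLm M" and Tq: "\<And>n. n \<in> {1..5} \<Longrightarrow> fltm M (q n) = q' n"
      using is_flt_D by blast
    define S where "S = mm N' (mm M Ni)"
    have S: "fltm S x = fltm N' (fltm M (fltm Ni x))" for x
      by (simp add: S_def fltm_comp glM glNi qGLm_mult)
    have SN: "fltm S (fltm N (q n)) = fltm N' (q' n)" if "n \<in> {1..5}" for n
      using Tq[OF that] by (simp add: S Ni1)
    have "fltm S None = None" using SN[of 3] N3 N'3 by simp
    moreover have "fltm S (Some 0) = Some 0" using SN[of 1] N1 N'1 by simp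
    moreover have "fltm S (Some 1) = Some 1" using SN[of 2] N2 N'2 by simp
    ultimately obtain e where e: "e \<noteq> 0" "\<And>x. fltm S (Some x) = Some (e * x * inverse e)"
      using fix3 by blast
    show "\<exists>a::quat. a \<noteq> 0 \<and>
            cross_ratio (q' 1) (q' 2) (q' 3) (q' 4) = a * cross_ratio (q 1) (q 2) (q 3) (q 4) * inverse a \<and>
            cross_ratio (q' 1) (q' 2) (q' 3) (q' 5) = a * cross_ratio (q 1) (q 2) (q 3) (q 5) * inverse a"
      using e SN[of 4] SN[of 5] N4 N5 N'4 N'5 by (intro exI[of _ e]) auto
  next
    assume "\<exists>a::quat. a \<noteq> 0 \<and>
            cross_ratio (q' 1) (q' 2) (q' 3) (q' 4) = a * cross_ratio (q 1) (q 2) (q 3) (q 4) * inverse a \<and>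
            cross_ratio (q' 1) (q' 2) (q' 3) (q' 5) = a * cross_ratio (q 1) (q 2) (q 3) (q 5) * inverse a"
    then obtain e where e: "e \<noteq> 0"
      "cross_ratio (q' 1) (q' 2) (q' 3) (q' 4) = e * cross_ratio (q 1) (q 2) (q 3) (q 4) * inverse e"
      "cross_ratio (q' 1) (q' 2) (q' 3) (q' 5) = e * cross_ratio (q 1) (q 2) (q 3) (q 5) * inverse e"
      by blast
    have glC: "qGLm (e,0,0,e)" using e(1) by (rule qGLm_upper) (rule e(1))
    define M where "M = mm N'i (mm (e,0,0,e) N)"
    have glM: "qGLm M" unfolding M_def by (intro qGLm_mult glN'i glC glN)
    have Mx: "fltm M x = fltm N'i (fltm (e,0,0,e) (fltm N x))" for x
      by (simp only: M_def fltm_comp[OF glN, of "(e,0,0,e)"] fltm_comp[OF qGLm_mult[OF glC glN]])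
    have CN: "fltm (e,0,0,e) (fltm N (q n)) = fltm N' (q' n)" if "n \<in> {1..5}" for n
      using five[OF that] e N1 N2 N3 N4 N5 N'1 N'2 N'3 N'4 N'5
      by (auto simp only: fltm_conj fltm_conjN) (auto simp: e(1))
    have "\<forall>n\<in>{1..5}. fltm M (q n) = q' n"
      using CN by (simp add: Mx N'i1)
    then show "\<exists>T. is_flt T \<and> (\<forall>n\<in>{1..5}. T (q n) = q' n)"
      using is_flt_m[OF glM] by blast
  qed
qed

end
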